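(* Let $p\ge3$ be a prime, let $k\ge1$ and let $c>0$. If $D$ is a probability distribution on $\mathbb{F}_p^k$ such that $D(W)\le1-c$ for every proper affine subspace $W$ of $\mathbb{F}_p^k$, then for every positive integer $M\ge 2kp^2\log p/(c\pi^2)$ the distribution $MD$ satisfies $|MD(x)-p^{-k}|\le p^{-2k}$ for each $x\in\mathbb{F}_p^k$.
   Context: $D(W)=\sum_{x\in W}D(x)$. $MD$ denotes the $M$-fold convolution of $D$ with itself, i.e. the distribution of the sum of $M$ independent random variables with distribution $D$. *)

theory Defs
  imports Complex_Main "HOL-Computational_Algebra.Primes"
begin

text \<open>Vectors of F_p^k are represented as functions nat => nat whose first k
  entries lie in {0..<p} and whose remaining entries are 0.\<close>

definition vecs :: "nat \<Rightarrow> nat \<Rightarrow> (nat \<Rightarrow> nat) set" where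
  "vecs p k = {x. (\<forall>i<k. x i < p) \<and> (\<forall>i\<ge>k. x i = 0)}"

definition vzero :: "nat \<Rightarrow> nat" where
  "vzero = (\<lambda>i. 0)"

definition vadd :: "nat \<Rightarrow> (nat \<Rightarrow> nat) \<Rightarrow> (nat \<Rightarrow> nat) \<Rightarrow> (nat \<Rightarrow> nat)" where
  "vadd p x y = (\<lambda>i. (x i + y i) mod p)"

definition vsub :: "nat \<Rightarrow> (nat \<Rightarrow> nat) \<Rightarrow> (nat \<Rightarrow> nat) \<Rightarrow> (nat \<Rightarrow> nat)" where
  "vsub p x y = (\<lambda>i. (x i + p - y i) mod p)"

definition vsmult :: "nat \<Rightarrow> nat \<Rightarrow> (nat \<Rightarrow> nat) \<Rightarrow> (nat \<Rightarrow> nat)" where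
  "vsmult p a x = (\<lambda>i. (a * x i) mod p)"

definition lin_subspace :: "nat \<Rightarrow> nat \<Rightarrow> (nat \<Rightarrow> nat) set \<Rightarrow> bool" where
  "lin_subspace p k V \<longleftrightarrow> V \<subseteq> vecs p k \<and> vzero \<in> V \<and>
     (\<forall>x\<in>V. \<forall>y\<in>V. vadd p x y \<in> V) \<and> (\<forall>a<p. \<forall>x\<in>V. vsmult p a x \<in> V)"

definition affine_subspace :: "nat \<Rightarrow> nat \<Rightarrow> (nat \<Rightarrow> nat) set \<Rightarrow> bool" where
  "affine_subspace p k W \<longleftrightarrow> (\<exists>v\<in>vecs p k. \<exists>V. lin_subspace p k V \<and> W = vadd p v ` V)"

definition proper_affine_subspace :: "nat \<Rightarrow> nat \<Rightarrow> (nat \<Rightarrow> nat) set \<Rightarrow> bool" where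
  "proper_affine_subspace p k W \<longleftrightarrow> affine_subspace p k W \<and> W \<noteq> vecs p k"

definition is_distribution :: "nat \<Rightarrow> nat \<Rightarrow> ((nat \<Rightarrow> nat) \<Rightarrow> real) \<Rightarrow> bool" where
  "is_distribution p k D \<longleftrightarrow> (\<forall>x\<in>vecs p k. D x \<ge> 0) \<and> (\<Sum>x\<in>vecs p k. D x) = 1"

definition conv :: "nat \<Rightarrow> nat \<Rightarrow> ((nat \<Rightarrow> nat) \<Rightarrow> real) \<Rightarrow> ((nat \<Rightarrow> nat) \<Rightarrow> real)
    \<Rightarrow> ((nat \<Rightarrow> nat) \<Rightarrow> real)" where
  "conv p k D E = (\<lambda>x. \<Sum>y\<in>vecs p k. D y * E (vsub p x y))"

fun conv_pow :: "nat \<Rightarrow> nat \<Rightarrow> ((nat \<Rightarrow> nat) \<Rightarrow> real) \<Rightarrow> nat \<Rightarrow> ((nat \<Rightarrow> nat) \<Rightarrow> real)" where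
  "conv_pow p k D 0 = (\<lambda>x. if x = vzero then 1 else 0)"
| "conv_pow p k D (Suc M) = conv p k D (conv_pow p k D M)"

end

theory Submission imports Defs "HOL-Analysis.Analysis" begin

definition E :: "nat \<Rightarrow> nat \<Rightarrow> complex" where
  "E p n = cis (2 * pi * real n / real p)"

definition chi :: "nat \<Rightarrow> nat \<Rightarrow> (nat \<Rightarrow> nat) \<Rightarrow> (nat \<Rightarrow> nat) \<Rightarrow> complex" where
  "chi p k \<xi> x = E p (\<Sum>i<k. \<xi> i * x i)"

definition FT :: "nat \<Rightarrow> nat \<Rightarrow> ((nat \<Rightarrow> nat) \<Rightarrow> real) \<Rightarrow> (nat \<Rightarrow> nat) \<Rightarrow> complex" where
  "FT p k f \<xi> = (\<Sum>x\<in>vecs p k. complex_of_real (f x) * chi p k \<xi> x)"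

definition unitv :: "nat \<Rightarrow> nat \<Rightarrow> nat" where
  "unitv i = (\<lambda>j. if j = i then 1 else 0)"

lemma E_add: "E p (a + b) = E p a * E p b"
  by (simp add: E_def cis_mult add_divide_distrib distrib_left)

lemma E_0[simp]: "E p 0 = 1"
  by (simp add: E_def)

lemma E_mult_p: assumes "p > 0" shows "E p (p * m) = 1"
proof -
  have "2 * pi * real (p * m) / real p = 2 * pi * real m" using assms by simp
  then show ?thesis by (simp add: E_def)
qed

lemma E_mod: assumes "p > 0" shows "E p (n mod p) = E p n"
proof -
  have "E p n = E p (n mod p + p * (n div p))" by (simp only: mod_mult_div_eq)
  also have "\<dots> = E p (n mod p)" by (simp only: E_add E_mult_p[OF assms] mult_1_right)
  finally show ?thesis by simp
qed

lemma E_mulmod: assumes "p > 0" shows "E p (a * (b mod p)) = E p (a * b)"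
  by (metis E_mod assms mod_mult_right_eq)

lemma E_pow: "E p n ^ a = E p (n * a)"
  by (induction a) (simp_all add: E_add)

lemma norm_E[simp]: "norm (E p n) = 1"
  by (simp add: E_def)

lemma cnj_E: "cnj (E p n) * E p n = 1"
  by (simp add: E_def cis_cnj cis_mult)

lemma Re_E: "Re (E p n) = cos (2 * pi * real n / real p)"
  by (simp add: E_def)

lemma E_sum: "finite A \<Longrightarrow> E p (\<Sum>i\<in>A. f i) = (\<Prod>i\<in>A. E p (f i))"
  by (induction A rule: finite_induct) (auto simp: E_add)

lemma cos_le_lemma:
  assumes p: "p > 0" and n: "n mod p \<noteq> 0"
  shows "cos (2 * pi * real n / real p) \<le> cos (2 * pi / real p)"
proof -
  define r where "r = n mod p"
  have r1: "1 \<le> r" "r < p" using n p by (auto simp: r_def)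
  have "cos (2 * pi * real n / real p) = cos (2 * pi * real r / real p + 2 * pi * real (n div p))"
  proof -
    have "real n = real r + real p * real (n div p)"
      by (simp add: r_def flip: of_nat_mult of_nat_add)
    then have "2 * pi * real n / real p = 2 * pi * real r / real p + 2 * pi * real (n div p)"
      using p by (simp add: field_simps)
    then show ?thesis by simp
  qed
  also have "\<dots> = cos (2 * pi * real r / real p)"
    using cos_int_2pin[of "int (n div p)"] sin_int_2pin[of "int (n div p)"]
    by (simp add: cos_add mult.commute)
  finally have eq: "cos (2 * pi * real n / real p) = cos (2 * pi * real r / real p)" .
  show ?thesis
  proof (cases "2 * r \<le> p")
    case True
    have "cos (2 * pi * real r / real p) \<le> cos (2 * pi / real p)"
    proof (rule cos_monotone_0_pi_le)
      show "0 \<le> 2 * pi / real p" using p by simp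
      show "2 * pi / real p \<le> 2 * pi * real r / real p"
        using r1 p by (simp add: divide_right_mono)
      have "2 * pi * real r / real p = pi * (real (2*r) / real p)" by simp
      also have "\<dots> \<le> pi * 1" using True p by (intro mult_left_mono) auto
      finally show "2 * pi * real r / real p \<le> pi" by simp
    qed
    then show ?thesis using eq by simp
  next
    case False
    define r' where "r' = p - r"
    have r'1: "1 \<le> r'" "2 * r' \<le> p" using False r1 by (auto simp: r'_def)
    have "cos (2 * pi * real r / real p) = cos (2 * pi - 2 * pi * real r' / real p)"
    proof -
      have "real r = real p - real r'" using r1 by (simp add: r'_def)
      then have "2 * pi * real r / real p = 2 * pi * (real p - real r') / real p"
        by simp
      also have "\<dots> = 2 * pi - 2 * pi * real r' / real p"
        using p by (simp add: diff_divide_distrib right_diff_distrib)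
      finally have "2 * pi * real r / real p = 2 * pi - 2 * pi * real r' / real p" .
      then show ?thesis by simp
    qed
    also have "\<dots> = cos (2 * pi * real r' / real p)" by simp
    also have "\<dots> \<le> cos (2 * pi / real p)"
    proof (rule cos_monotone_0_pi_le)
      show "0 \<le> 2 * pi / real p" using p by simp
      show "2 * pi / real p \<le> 2 * pi * real r' / real p"
        using r'1 p by (simp add: divide_right_mono)
      have "2 * pi * real r' / real p = pi * (real (2*r') / real p)" by simp
      also have "\<dots> \<le> pi * 1" using r'1 p by (intro mult_left_mono) auto
      finally show "2 * pi * real r' / real p \<le> pi" by simp
    qed
    finally show ?thesis using eq by simp
  qed
qed

lemma cos_2pi_p_lt: assumes "p > 1" shows "cos (2 * pi / real p) < 1"
proof -
  have "cos (2 * pi / real p) < cos 0"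
  proof (rule cos_monotone_0_pi)
    show "0 \<le> (0::real)" by simp
    show "0 < 2 * pi / real p" using assms by simp
    have "2 * pi / real p \<le> 2 * pi / 2" using assms by (intro divide_left_mono) auto
    then show "2 * pi / real p \<le> pi" by simp
  qed
  then show ?thesis by simp
qed

lemma E_eq_1: assumes "p > 1" "E p n = 1" shows "n mod p = 0"
proof (rule ccontr)
  assume "n mod p \<noteq> 0"
  then have "cos (2 * pi * real n / real p) \<le> cos (2 * pi / real p)"
    using assms by (intro cos_le_lemma) auto
  moreover have "cos (2 * pi * real n / real p) = 1" using assms Re_E[of p n] by simp
  ultimately show False using cos_2pi_p_lt[OF assms(1)] by simp
qed

lemma vecs_iff: "x \<in> vecs p k \<longleftrightarrow> (\<forall>i<k. x i < p) \<and> (\<forall>i\<ge>k. x i = 0)"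
  by (simp add: vecs_def)

lemma vzero_in: "p > 0 \<Longrightarrow> vzero \<in> vecs p k"
  by (simp add: vecs_def vzero_def)

lemma vadd_in: "p > 0 \<Longrightarrow> x \<in> vecs p k \<Longrightarrow> y \<in> vecs p k \<Longrightarrow> vadd p x y \<in> vecs p k"
  by (simp add: vecs_def vadd_def)

lemma vsub_in: "p > 0 \<Longrightarrow> x \<in> vecs p k \<Longrightarrow> y \<in> vecs p k \<Longrightarrow> vsub p x y \<in> vecs p k"
  by (simp add: vecs_def vsub_def)

lemma vsmult_in: "p > 0 \<Longrightarrow> x \<in> vecs p k \<Longrightarrow> vsmult p a x \<in> vecs p k"
  by (simp add: vecs_def vsmult_def)

lemma unitv_in: "p > 1 \<Longrightarrow> i < k \<Longrightarrow> unitv i \<in> vecs p k"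
  by (simp add: vecs_def unitv_def)

lemma mod_aux1:
  fixes a b p :: nat assumes "a < p" "b < p"
  shows "((a + b) mod p + p - a) mod p = b"
proof (cases "a + b < p")
  case True
  then have "(a + b) mod p + p - a = b + p" by simp
  then show ?thesis using assms by simp
next
  case False
  then have "(a + b) mod p = a + b - p" using assms by (simp add: le_mod_geq)
  then have "(a + b) mod p + p - a = b" using False by simp
  then show ?thesis using assms by simp
qed

lemma mod_aux2:
  fixes a b p :: nat assumes "a < p" "b < p"
  shows "(a + (b + p - a) mod p) mod p = b"
proof (cases "a \<le> b")
  case True
  then have e: "b + p - a = (b - a) + p" by simp
  have "((b - a) + p) mod p = b - a" using assms by simp
  then have "(b + p - a) mod p = b - a" unfolding e .
  then show ?thesis using assms True by simp
next
  case False
  then have "(b + p - a) mod p = b + p - a" using assms by simp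
  then show ?thesis using assms False by simp
qed

lemma vsub_vadd: assumes "p > 0" "y \<in> vecs p k" "z \<in> vecs p k"
  shows "vsub p (vadd p y z) y = z"
proof
  fix i show "vsub p (vadd p y z) y i = z i"
  proof (cases "i < k")
    case True then show ?thesis using assms mod_aux1[of "y i" p "z i"] by (simp add: vecs_def vsub_def vadd_def)
  next
    case False then show ?thesis using assms by (simp add: vecs_def vsub_def vadd_def)
  qed
qed

lemma vadd_vsub: assumes "p > 0" "x \<in> vecs p k" "y \<in> vecs p k"
  shows "vadd p y (vsub p x y) = x"
proof
  fix i show "vadd p y (vsub p x y) i = x i"
  proof (cases "i < k")
    case True then show ?thesis using assms mod_aux2[of "y i" p "x i"] by (simp add: vecs_def vsub_def vadd_def)
  next
    case False then show ?thesis using assms by (simp add: vecs_def vsub_def vadd_def)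
  qed
qed

lemma vadd_vzero: assumes "x \<in> vecs p k" shows "vadd p x vzero = x"
proof
  fix i show "vadd p x vzero i = x i"
    using assms by (cases "i < k") (auto simp: vecs_def vadd_def vzero_def)
qed

lemma vsub_self: assumes "x \<in> vecs p k" shows "vsub p x x = vzero"
  using assms by (auto simp: vecs_def vsub_def vzero_def)

lemma bij_vadd: assumes "p > 0" "y \<in> vecs p k" shows "bij_betw (vadd p y) (vecs p k) (vecs p k)"
  by (rule bij_betwI[where g = "\<lambda>x. vsub p x y"])
     (use assms in \<open>auto simp: vadd_in vsub_in vsub_vadd vadd_vsub\<close>)

lemma vecs_bij: "bij_betw (\<lambda>x. restrict x {..<k}) (vecs p k) (PiE {..<k} (\<lambda>_. {..<p}))"
proof (rule bij_betwI[where g = "\<lambda>h i. if i < k then h i else 0"])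
  show "(\<lambda>x. restrict x {..<k}) \<in> vecs p k \<rightarrow> PiE {..<k} (\<lambda>_. {..<p})"
    by (auto simp: vecs_def)
  show "(\<lambda>h i. if i < k then h i else 0) \<in> PiE {..<k} (\<lambda>_. {..<p}) \<rightarrow> vecs p k"
    by (auto simp: vecs_def PiE_def Pi_def)
  show "\<And>x. x \<in> vecs p k \<Longrightarrow> (\<lambda>i. if i < k then restrict x {..<k} i else 0) = x"
    by (auto simp: vecs_def)
  show "\<And>h. h \<in> PiE {..<k} (\<lambda>_. {..<p}) \<Longrightarrow> restrict (\<lambda>i. if i < k then h i else 0) {..<k} = h"
    by (auto simp: PiE_def extensional_def)
qed

lemma finite_vecs[simp]: "finite (vecs p k)"
  using bij_betw_finite[OF vecs_bij] by (simp add: finite_PiE)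

lemma card_vecs: "card (vecs p k) = p ^ k"
  using bij_betw_same_card[OF vecs_bij] by (simp add: card_PiE)

lemma chi_prod: "chi p k \<xi> x = (\<Prod>i<k. E p (\<xi> i * x i))"
  by (simp add: chi_def E_sum)

lemma chi_vadd: assumes "p > 0" shows "chi p k \<xi> (vadd p x y) = chi p k \<xi> x * chi p k \<xi> y"
proof -
  have "\<And>i. E p (\<xi> i * vadd p x y i) = E p (\<xi> i * x i) * E p (\<xi> i * y i)"
    by (simp add: vadd_def E_mulmod[OF assms] distrib_left E_add)
  then show ?thesis by (simp add: chi_prod prod.distrib)
qed

lemma chi_vsub: assumes "p > 0" "y \<in> vecs p k" shows "chi p k \<xi> (vsub p x y) * chi p k \<xi> y = chi p k \<xi> x"
proof -
  have "\<And>i. i < k \<Longrightarrow> E p (\<xi> i * vsub p x y i) * E p (\<xi> i * y i) = E p (\<xi> i * x i)"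
  proof -
    fix i assume i: "i < k"
    then have yi: "y i < p" using assms by (simp add: vecs_def)
    have "\<xi> i * (x i + p - y i) + \<xi> i * y i = \<xi> i * x i + p * \<xi> i"
    proof -
      have "x i + p - y i + y i = x i + p" using yi by simp
      then have "\<xi> i * (x i + p - y i + y i) = \<xi> i * (x i + p)" by simp
      then show ?thesis by (simp add: distrib_left mult.commute)
    qed
    then have "E p (\<xi> i * (x i + p - y i)) * E p (\<xi> i * y i) = E p (\<xi> i * x i) * E p (p * \<xi> i)"
      by (metis E_add)
    then show "E p (\<xi> i * vsub p x y i) * E p (\<xi> i * y i) = E p (\<xi> i * x i)"
      by (simp add: vsub_def E_mulmod[OF assms(1)] E_mult_p[OF assms(1)])
  qed
  then show ?thesis by (simp add: chi_prod prod.distrib[symmetric])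
qed

lemma norm_chi[simp]: "norm (chi p k \<xi> x) = 1"
  by (simp add: chi_def)

lemma cnj_chi: "cnj (chi p k \<xi> x) * chi p k \<xi> x = 1"
  by (simp add: chi_def cnj_E)

lemma chi_ne0[simp]: "chi p k \<xi> x \<noteq> 0"
  using norm_chi[of p k \<xi> x] by (metis norm_zero zero_neq_one)

lemma chi_vsub': assumes "p > 0" "y \<in> vecs p k" shows "chi p k \<xi> (vsub p x y) = chi p k \<xi> x * cnj (chi p k \<xi> y)"
proof -
  have "chi p k \<xi> (vsub p x y) = chi p k \<xi> (vsub p x y) * (chi p k \<xi> y * cnj (chi p k \<xi> y))"
    using cnj_chi[of p k \<xi> y] by (simp add: mult.commute)
  also have "\<dots> = chi p k \<xi> x * cnj (chi p k \<xi> y)"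
    using chi_vsub[OF assms, of \<xi> x] by (simp add: mult.assoc[symmetric])
  finally show ?thesis .
qed

lemma chi_vsmult: assumes "p > 0" shows "chi p k \<xi> (vsmult p a x) = chi p k \<xi> x ^ a"
proof -
  have "\<And>i. E p (\<xi> i * vsmult p a x i) = E p (\<xi> i * x i) ^ a"
    by (simp add: vsmult_def E_mulmod[OF assms] E_pow mult.commute mult.left_commute)
  then show ?thesis by (simp add: chi_prod prod_power_distrib)
qed

lemma chi_sym: "chi p k \<xi> x = chi p k x \<xi>"
  by (simp add: chi_def mult.commute)

lemma chi_vzero[simp]: "chi p k \<xi> vzero = 1" "chi p k vzero x = 1"
  by (simp_all add: chi_def vzero_def)

lemma chi_unitv: assumes "i < k" shows "chi p k \<xi> (unitv i) = E p (\<xi> i)"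
proof -
  have "(\<Sum>j<k. \<xi> j * unitv i j) = (\<Sum>j<k. if j = i then \<xi> j else 0)"
    by (rule sum.cong) (auto simp: unitv_def)
  also have "\<dots> = \<xi> i" using assms by (simp add: sum.delta')
  finally show ?thesis by (simp add: chi_def)
qed


lemma FT_conv: assumes "p > 0"
  shows "FT p k (conv p k D G) \<xi> = FT p k D \<xi> * FT p k G \<xi>"
proof -
  let ?V = "vecs p k"
  have inner: "(\<Sum>x\<in>?V. complex_of_real (G (vsub p x y)) * chi p k \<xi> x) = chi p k \<xi> y * FT p k G \<xi>"
    if y: "y \<in> ?V" for y
  proof -
    have "(\<Sum>x\<in>?V. complex_of_real (G (vsub p x y)) * chi p k \<xi> x)
        = (\<Sum>z\<in>?V. complex_of_real (G (vsub p (vadd p y z) y)) * chi p k \<xi> (vadd p y z))"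
      using sum.reindex_bij_betw[OF bij_vadd[OF assms y], of "\<lambda>x. complex_of_real (G (vsub p x y)) * chi p k \<xi> x"]
      by simp
    also have "\<dots> = (\<Sum>z\<in>?V. chi p k \<xi> y * (complex_of_real (G z) * chi p k \<xi> z))"
      by (rule sum.cong) (auto simp: vsub_vadd[OF assms y] chi_vadd[OF assms])
    also have "\<dots> = chi p k \<xi> y * FT p k G \<xi>"
      by (simp add: FT_def sum_distrib_left)
    finally show ?thesis .
  qed
  have "FT p k (conv p k D G) \<xi> = (\<Sum>x\<in>?V. \<Sum>y\<in>?V. complex_of_real (D y) * (complex_of_real (G (vsub p x y)) * chi p k \<xi> x))"
    by (simp add: FT_def conv_def sum_distrib_right mult.assoc)
  also have "\<dots> = (\<Sum>y\<in>?V. complex_of_real (D y) * (\<Sum>x\<in>?V. complex_of_real (G (vsub p x y)) * chi p k \<xi> x))"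
    by (subst sum.swap) (simp add: sum_distrib_left)
  also have "\<dots> = (\<Sum>y\<in>?V. complex_of_real (D y) * chi p k \<xi> y * FT p k G \<xi>)"
    by (rule sum.cong) (auto simp: inner mult.assoc)
  also have "\<dots> = FT p k D \<xi> * FT p k G \<xi>"
    by (simp add: FT_def sum_distrib_right)
  finally show ?thesis .
qed

lemma FT_pow: assumes "p > 0"
  shows "FT p k (conv_pow p k D n) \<xi> = FT p k D \<xi> ^ n"
proof (induction n)
  case 0
  have "FT p k (conv_pow p k D 0) \<xi> = (\<Sum>x\<in>vecs p k. if x = vzero then (1::complex) else 0)"
    unfolding FT_def by (rule sum.cong) auto
  also have "\<dots> = 1" using vzero_in[OF assms] by (simp add: sum.delta')
  finally show ?case by simp
next
  case (Suc n)
  then show ?case by (simp add: FT_conv[OF assms])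
qed

lemma orth: assumes p: "p > 1" and z: "z \<in> vecs p k"
  shows "(\<Sum>\<xi>\<in>vecs p k. chi p k \<xi> z) = (if z = vzero then of_nat (p ^ k) else 0)"
proof (cases "z = vzero")
  case True
  then show ?thesis by (simp add: card_vecs)
next
  case False
  have p0: "p > 0" using p by simp
  obtain i where i: "i < k" "z i \<noteq> 0"
  proof -
    have "\<exists>i<k. z i \<noteq> 0"
    proof (rule ccontr)
      assume "\<not> (\<exists>i<k. z i \<noteq> 0)"
      then have "z = vzero" using z by (auto simp: vecs_def vzero_def fun_eq_iff; metis not_le)
      then show False using False by simp
    qed
    then show ?thesis using that by blast
  qed
  let ?S = "(\<Sum>\<xi>\<in>vecs p k. chi p k z \<xi>)"
  have u: "unitv i \<in> vecs p k" using unitv_in[OF p i(1)] .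
  have "?S = (\<Sum>\<xi>\<in>vecs p k. chi p k z (vadd p (unitv i) \<xi>))"
    using sum.reindex_bij_betw[OF bij_vadd[OF p0 u], of "chi p k z"] by simp
  also have "\<dots> = chi p k z (unitv i) * ?S"
    by (simp add: chi_vadd[OF p0] sum_distrib_left)
  finally have eq: "?S = chi p k z (unitv i) * ?S" .
  have ne: "chi p k z (unitv i) \<noteq> 1"
  proof
    assume "chi p k z (unitv i) = 1"
    then have "E p (z i) = 1" using chi_unitv[OF i(1)] by simp
    then have "z i mod p = 0" using E_eq_1[OF p] by simp
    moreover have "z i < p" using z i(1) by (simp add: vecs_def)
    ultimately show False using i(2) by simp
  qed
  from eq have "(1 - chi p k z (unitv i)) * ?S = 0" by (simp add: algebra_simps)
  then have "?S = 0" using ne by simp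
  then show ?thesis using False by (simp add: chi_sym)
qed

lemma inversion: assumes p: "p > 1" and x: "x \<in> vecs p k"
  shows "complex_of_real (real p ^ k * f x) = (\<Sum>\<xi>\<in>vecs p k. FT p k f \<xi> * cnj (chi p k \<xi> x))"
proof -
  let ?V = "vecs p k"
  have p0: "p > 0" using p by simp
  have "(\<Sum>\<xi>\<in>?V. FT p k f \<xi> * cnj (chi p k \<xi> x))
      = (\<Sum>\<xi>\<in>?V. \<Sum>y\<in>?V. complex_of_real (f y) * (chi p k \<xi> y * cnj (chi p k \<xi> x)))"
    by (simp add: FT_def sum_distrib_right mult.assoc)
  also have "\<dots> = (\<Sum>\<xi>\<in>?V. \<Sum>y\<in>?V. complex_of_real (f y) * chi p k \<xi> (vsub p y x))"
    by (intro sum.cong refl) (simp add: chi_vsub'[OF p0 x])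
  also have "\<dots> = (\<Sum>y\<in>?V. complex_of_real (f y) * (\<Sum>\<xi>\<in>?V. chi p k \<xi> (vsub p y x)))"
    by (subst sum.swap) (simp add: sum_distrib_left)
  also have "\<dots> = (\<Sum>y\<in>?V. if y = x then complex_of_real (f y) * of_nat (p ^ k) else 0)"
  proof (rule sum.cong[OF refl])
    fix y assume y: "y \<in> ?V"
    have "vsub p y x = vzero \<longleftrightarrow> y = x"
    proof
      assume "vsub p y x = vzero"
      then have "vadd p x (vsub p y x) = x" using vadd_vzero[OF x] by simp
      then show "y = x" using vadd_vsub[OF p0 y x] by simp
    qed (simp add: vsub_self[OF x])
    then show "complex_of_real (f y) * (\<Sum>\<xi>\<in>?V. chi p k \<xi> (vsub p y x)) = (if y = x then complex_of_real (f y) * of_nat (p ^ k) else 0)"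
      using orth[OF p vsub_in[OF p0 y x]] by simp
  qed
  also have "\<dots> = complex_of_real (f x) * of_nat (p ^ k)" using x by (simp add: sum.delta')
  finally show ?thesis by (simp add: mult.commute)
qed

lemma P_bound1:
  fixes D :: "'a \<Rightarrow> real" and h :: "'a \<Rightarrow> 'b"
  assumes fin: "finite V" and D0: "\<And>x. x \<in> V \<Longrightarrow> D x \<ge> 0" and D1: "(\<Sum>x\<in>V. D x) = 1"
    and Hb: "\<And>x. x \<in> V \<Longrightarrow> (\<Sum>y\<in>{y\<in>V. h y = h x}. D y) \<le> 1 - c"
  shows "(\<Sum>x\<in>V. D x * (\<Sum>y\<in>{y\<in>V. h y = h x}. D y)) \<le> 1 - c"
proof -
  have "(\<Sum>x\<in>V. D x * (\<Sum>y\<in>{y\<in>V. h y = h x}. D y)) \<le> (\<Sum>x\<in>V. D x * (1 - c))"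
    by (rule sum_mono) (intro mult_left_mono Hb D0; simp)
  also have "\<dots> = 1 - c" by (simp add: sum_distrib_right[symmetric] D1)
  finally show ?thesis .
qed

lemma P_bound2:
  fixes D :: "'a \<Rightarrow> real" and h :: "'a \<Rightarrow> 'b"
  assumes fin: "finite V" and D0: "\<And>x. x \<in> V \<Longrightarrow> D x \<ge> 0" and D1: "(\<Sum>x\<in>V. D x) = 1"
    and Hb: "\<And>x. x \<in> V \<Longrightarrow> (\<Sum>y\<in>{y\<in>V. h y = h x}. D y) \<le> 1 - c"
    and c2: "c \<le> 1/2"
  shows "(\<Sum>x\<in>V. D x * (\<Sum>y\<in>{y\<in>V. h y = h x}. D y)) \<le> (1-c)^2 + c^2"
proof -
  define Hm where "Hm x = (\<Sum>y\<in>{y\<in>V. h y = h x}. D y)" for x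
  have Hm_alt: "Hm x = (\<Sum>y\<in>V. if h y = h x then D y else 0)" for x
    unfolding Hm_def using fin by (simp add: sum.inter_filter)
  show ?thesis
  proof (cases "\<exists>x0\<in>V. Hm x0 > 1/2")
    case True
    then obtain x0 where x0: "x0 \<in> V" "Hm x0 > 1/2" by blast
    define m where "m = Hm x0"
    have m1: "m \<le> 1 - c" using Hb[OF x0(1)] by (simp add: m_def Hm_def)
    have bnd: "Hm x \<le> (if h x = h x0 then m else 1 - m)" if x: "x \<in> V" for x
    proof (cases "h x = h x0")
      case True
      then show ?thesis by (simp add: m_def Hm_def)
    next
      case False
      have "Hm x + m = (\<Sum>y\<in>V. (if h y = h x then D y else 0) + (if h y = h x0 then D y else 0))"
        by (simp add: Hm_alt m_def sum.distrib)
      also have "\<dots> \<le> (\<Sum>y\<in>V. D y)"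
        by (rule sum_mono) (use False D0 in auto)
      finally show ?thesis using False D1 by simp
    qed
    have "(\<Sum>x\<in>V. D x * Hm x) \<le> (\<Sum>x\<in>V. D x * (if h x = h x0 then m else 1 - m))"
      by (rule sum_mono) (intro mult_left_mono bnd D0; simp)
    also have "\<dots> = (\<Sum>x\<in>V. D x * (1 - m) + (if h x = h x0 then D x else 0) * (2*m - 1))"
      by (rule sum.cong) (auto simp: algebra_simps)
    also have "\<dots> = (1 - m) + m * (2*m - 1)"
      by (simp add: sum.distrib sum_distrib_right[symmetric] D1 m_def Hm_alt)
    also have "\<dots> \<le> (1-c)^2 + c^2"
    proof -
      have "0 \<le> (1 - c - m) * (m - c)" using m1 x0(2) c2 by (simp add: m_def)
      then show ?thesis by (simp add: power2_eq_square algebra_simps)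
    qed
    finally show ?thesis by (simp add: Hm_def)
  next
    case False
    have "(\<Sum>x\<in>V. D x * Hm x) \<le> (\<Sum>x\<in>V. D x * (1/2))"
      by (rule sum_mono, rule mult_left_mono) (use False D0 in auto)
    also have "\<dots> = 1/2" by (simp only: sum_distrib_right[symmetric] D1)
    also have "\<dots> \<le> (1-c)^2 + c^2"
    proof -
      have "0 \<le> (c - 1/2)^2" by simp
      then show ?thesis by (simp add: power2_eq_square algebra_simps)
    qed
    finally show ?thesis by (simp add: Hm_def)
  qed
qed

definition Hset :: "nat \<Rightarrow> nat \<Rightarrow> (nat \<Rightarrow> nat) \<Rightarrow> (nat \<Rightarrow> nat) \<Rightarrow> (nat \<Rightarrow> nat) set" where
  "Hset p k \<xi> x = {y \<in> vecs p k. chi p k \<xi> y = chi p k \<xi> x}"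

lemma nonzero_coord: assumes "z \<in> vecs p k" "z \<noteq> vzero" shows "\<exists>i<k. z i \<noteq> 0 \<and> z i < p"
proof (rule ccontr)
  assume "\<not> (\<exists>i<k. z i \<noteq> 0 \<and> z i < p)"
  then have "z = vzero" using assms(1) by (auto simp: vecs_def vzero_def fun_eq_iff; metis not_le)
  then show False using assms(2) by simp
qed

lemma H_proper: assumes p: "p > 1" and xi: "\<xi> \<in> vecs p k" "\<xi> \<noteq> vzero" and x: "x \<in> vecs p k"
  shows "proper_affine_subspace p k (Hset p k \<xi> x)"
proof -
  have p0: "p > 0" using p by simp
  define L where "L = {y \<in> vecs p k. chi p k \<xi> y = 1}"
  have lin: "lin_subspace p k L"
    unfolding lin_subspace_def L_def
    using p0 by (auto simp: vzero_in vadd_in vsmult_in chi_vadd chi_vsmult)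
  have eq: "Hset p k \<xi> x = vadd p x ` L"
  proof
    show "Hset p k \<xi> x \<subseteq> vadd p x ` L"
    proof
      fix y assume y: "y \<in> Hset p k \<xi> x"
      then have yV: "y \<in> vecs p k" and cy: "chi p k \<xi> y = chi p k \<xi> x" by (auto simp: Hset_def)
      have "vsub p y x \<in> L"
        unfolding L_def using vsub_in[OF p0 yV x] chi_vsub'[OF p0 x, of \<xi> y] cy cnj_chi[of p k \<xi> x]
        by (simp add: mult.commute)
      moreover have "y = vadd p x (vsub p y x)" using vadd_vsub[OF p0 yV x] by simp
      ultimately show "y \<in> vadd p x ` L" by blast
    qed
    show "vadd p x ` L \<subseteq> Hset p k \<xi> x"
      unfolding L_def Hset_def using p0 x by (auto simp: vadd_in chi_vadd)
  qed
  have aff: "affine_subspace p k (Hset p k \<xi> x)"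
    unfolding affine_subspace_def using x lin eq by blast
  obtain i where i: "i < k" "\<xi> i \<noteq> 0" "\<xi> i < p" using nonzero_coord[OF xi] by blast
  define w where "w = vadd p x (unitv i)"
  have wV: "w \<in> vecs p k" unfolding w_def using vadd_in[OF p0 x unitv_in[OF p i(1)]] .
  have "E p (\<xi> i) \<noteq> 1" using E_eq_1[OF p, of "\<xi> i"] i by auto
  then have "chi p k \<xi> w \<noteq> chi p k \<xi> x"
    unfolding w_def by (simp add: chi_vadd[OF p0] chi_unitv[OF i(1)])
  then have "w \<notin> Hset p k \<xi> x" by (simp add: Hset_def)
  then have "Hset p k \<xi> x \<noteq> vecs p k" using wV by blast
  then show ?thesis using aff by (simp add: proper_affine_subspace_def)
qed

lemma Re_chi_bound: assumes p: "p > 1" and x: "x \<in> vecs p k" and y: "y \<in> vecs p k"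
  shows "Re (chi p k \<xi> (vsub p x y)) \<le> (if chi p k \<xi> y = chi p k \<xi> x then 1 else 1 - 2 * sin (pi / real p) ^ 2)"
proof (cases "chi p k \<xi> y = chi p k \<xi> x")
  case True
  then show ?thesis using complex_Re_le_cmod[of "chi p k \<xi> (vsub p x y)"] by simp
next
  case False
  have p0: "p > 0" using p by simp
  define N where "N = (\<Sum>i<k. \<xi> i * vsub p x y i)"
  have cN: "chi p k \<xi> (vsub p x y) = E p N" by (simp add: chi_def N_def)
  have "E p N \<noteq> 1"
  proof
    assume "E p N = 1"
    then have "chi p k \<xi> x = chi p k \<xi> y" using chi_vsub[OF p0 y, of \<xi> x] cN by simp
    then show False using False by simp
  qed
  then have "N mod p \<noteq> 0" using E_mod[OF p0, of N] by (metis E_0)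
  then have "cos (2 * pi * real N / real p) \<le> cos (2 * pi / real p)" using cos_le_lemma p0 by blast
  also have "cos (2 * pi / real p) = 1 - 2 * sin (pi / real p) ^ 2"
    using cos_double_sin[of "pi / real p"] by simp
  finally show ?thesis using False cN Re_E by simp
qed

lemma FT_sq:
  fixes D :: "(nat \<Rightarrow> nat) \<Rightarrow> real"
  assumes p: "p > 1" and D0: "\<And>x. x \<in> vecs p k \<Longrightarrow> D x \<ge> 0" and D1: "(\<Sum>x\<in>vecs p k. D x) = 1"
  shows "(cmod (FT p k D \<xi>))^2 \<le> 1 - 2 * sin (pi / real p) ^ 2 *
     (1 - (\<Sum>x\<in>vecs p k. D x * (\<Sum>y\<in>{y\<in>vecs p k. chi p k \<xi> y = chi p k \<xi> x}. D y)))"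
proof -
  let ?V = "vecs p k"
  let ?s = "sin (pi / real p) ^ 2"
  have p0: "p > 0" using p by simp
  have "complex_of_real ((cmod (FT p k D \<xi>))^2) = FT p k D \<xi> * cnj (FT p k D \<xi>)"
    by (rule complex_norm_square)
  also have "\<dots> = (\<Sum>x\<in>?V. \<Sum>y\<in>?V. (complex_of_real (D x) * chi p k \<xi> x) * cnj (complex_of_real (D y) * chi p k \<xi> y))"
    by (simp add: FT_def sum_product)
  also have "\<dots> = (\<Sum>x\<in>?V. \<Sum>y\<in>?V. complex_of_real (D x * D y) * chi p k \<xi> (vsub p x y))"
    by (intro sum.cong refl) (simp add: chi_vsub'[OF p0] mult_ac)
  finally have "(cmod (FT p k D \<xi>))^2 = Re (\<Sum>x\<in>?V. \<Sum>y\<in>?V. complex_of_real (D x * D y) * chi p k \<xi> (vsub p x y))"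
    by (metis Re_complex_of_real)
  also have "\<dots> = (\<Sum>x\<in>?V. \<Sum>y\<in>?V. D x * D y * Re (chi p k \<xi> (vsub p x y)))"
    by simp
  also have "\<dots> \<le> (\<Sum>x\<in>?V. \<Sum>y\<in>?V. D x * D y * (if chi p k \<xi> y = chi p k \<xi> x then 1 else 1 - 2 * ?s))"
    by (intro sum_mono mult_left_mono Re_chi_bound[OF p]) (auto intro: D0 mult_nonneg_nonneg)
  also have "\<dots> = (\<Sum>x\<in>?V. D x * ((1 - 2 * ?s) * (\<Sum>y\<in>?V. D y) + 2 * ?s * (\<Sum>y\<in>?V. if chi p k \<xi> y = chi p k \<xi> x then D y else 0)))"
  proof (intro sum.cong refl)
    fix x assume "x \<in> ?V"
    have "(\<Sum>y\<in>?V. D x * D y * (if chi p k \<xi> y = chi p k \<xi> x then 1 else 1 - 2 * ?s))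
        = (\<Sum>y\<in>?V. D x * ((1 - 2 * ?s) * D y + 2 * ?s * (if chi p k \<xi> y = chi p k \<xi> x then D y else 0)))"
      by (intro sum.cong refl) (auto simp: algebra_simps)
    also have "\<dots> = D x * ((1 - 2 * ?s) * (\<Sum>y\<in>?V. D y) + 2 * ?s * (\<Sum>y\<in>?V. if chi p k \<xi> y = chi p k \<xi> x then D y else 0))"
      by (simp only: sum_distrib_left[symmetric] sum.distrib)
    finally show "(\<Sum>y\<in>?V. D x * D y * (if chi p k \<xi> y = chi p k \<xi> x then 1 else 1 - 2 * ?s))
        = D x * ((1 - 2 * ?s) * (\<Sum>y\<in>?V. D y) + 2 * ?s * (\<Sum>y\<in>?V. if chi p k \<xi> y = chi p k \<xi> x then D y else 0))" .
  qed
  also have "\<dots> = (\<Sum>x\<in>?V. D x * ((1 - 2 * ?s) + 2 * ?s * (\<Sum>y\<in>{y\<in>?V. chi p k \<xi> y = chi p k \<xi> x}. D y)))"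
    by (simp add: D1 sum.inter_filter)
  also have "\<dots> = (1 - 2 * ?s) + 2 * ?s * (\<Sum>x\<in>?V. D x * (\<Sum>y\<in>{y\<in>?V. chi p k \<xi> y = chi p k \<xi> x}. D y))"
  proof -
    let ?H = "\<lambda>x. (\<Sum>y\<in>{y\<in>?V. chi p k \<xi> y = chi p k \<xi> x}. D y)"
    have "(\<Sum>x\<in>?V. D x * ((1 - 2 * ?s) + 2 * ?s * ?H x)) = (\<Sum>x\<in>?V. (1 - 2 * ?s) * D x + 2 * ?s * (D x * ?H x))"
      by (intro sum.cong refl) (simp add: algebra_simps)
    also have "\<dots> = (1 - 2 * ?s) * (\<Sum>x\<in>?V. D x) + 2 * ?s * (\<Sum>x\<in>?V. D x * ?H x)"
      by (simp only: sum.distrib sum_distrib_left[symmetric])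
    finally show ?thesis using D1 by simp
  qed
  finally show ?thesis by (simp add: algebra_simps)
qed

lemma sin_lb: fixes x :: real assumes "0 \<le> x" shows "x - x^3/6 \<le> sin x"
proof -
  have "\<bar>sin x - (\<Sum>m<3. sin_coeff m * x ^ m)\<bar> \<le> inverse (fact 3) * \<bar>x\<bar> ^ 3"
    by (rule Maclaurin_sin_bound)
  moreover have "(\<Sum>m<3. sin_coeff m * x ^ m) = x"
    by (simp add: numeral_3_eq_3 sin_coeff_def)
  ultimately have "\<bar>sin x - x\<bar> * 6 \<le> x^3" using assms by (simp add: fact_numeral)
  moreover have "-(sin x - x) * 6 \<le> \<bar>sin x - x\<bar> * 6"
    by (rule mult_right_mono) (simp_all add: abs_ge_minus_self)
  ultimately have h: "-(sin x - x) * 6 \<le> x^3" by (rule order_trans[rotated])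
  show ?thesis using h by (simp add: field_simps)
qed

lemma exp_ub2: fixes y :: real assumes "0 \<le> y" shows "exp (-y) \<le> 1 - y + y^2/2"
proof -
  obtain t where "exp (-y) = (\<Sum>m<3. ((-y) ^ m) / fact m) + (exp t / fact 3) * (-y) ^ 3"
    using Maclaurin_exp_le by blast
  moreover have "(\<Sum>m<3. ((-y) ^ m) / fact m) = 1 - y + y^2/2"
    by (simp add: numeral_3_eq_3 fact_numeral power2_eq_square)
  moreover have "(exp t / fact 3) * (-y) ^ 3 \<le> 0"
    using assms by (simp add: mult_nonneg_nonpos)
  ultimately show ?thesis by linarith
qed

lemma exp_lb3: fixes y :: real assumes "0 \<le> y" shows "1 - y + y^2/2 - y^3/6 \<le> exp (-y)"
proof -
  obtain t where "exp (-y) = (\<Sum>m<4. ((-y) ^ m) / fact m) + (exp t / fact 4) * (-y) ^ 4"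
    using Maclaurin_exp_le by blast
  moreover have "(\<Sum>m<4. ((-y) ^ m) / fact m) = 1 - y + y^2/2 - y^3/6"
    by (simp add: eval_nat_numeral fact_numeral)
  moreover have "(exp t / fact 4) * (-y) ^ 4 \<ge> 0"
    using assms by simp
  ultimately show ?thesis by linarith
qed

lemma P1: fixes a z :: real assumes "0<a" "a\<le>1" "0<z" "z\<le>6/5"
  shows "(2-a)*(1-z/6)^2 \<ge> 1 - a*z/2 + a^2*z^2/6"
proof -
  have h1: "0 \<le> (a*z^2 - a^2*z^2)/6" using assms by (simp add: power2_eq_square mult_right_mono mult_left_le_one_le)
  have h2: "0 \<le> (1-a)*(1-2*z/3)" using assms by simp
  have h3: "0 \<le> a*z*(6-5*z)/36" using assms by simp
  have h4: "0 \<le> (z^2 - a*z^2)/18" using assms by (simp add: mult_left_le_one_le)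
  have e: "(2-a)*(1-z/6)^2 - (1 - a*z/2 + a^2*z^2/6) = (1-a)*(1-2*z/3) + a*z*(6-5*z)/36 + (a*z^2 - a^2*z^2)/6 + (z^2 - a*z^2)/18"
    by (simp add: power2_eq_square field_simps)
  show ?thesis using h1 h2 h3 h4 e by linarith
qed
lemma P2: fixes z :: real assumes "0<z" "z\<le>6/5" shows "1 - z*(1-z/6)^2 \<le> 1 - z + z^2/2 - z^3/6"
proof -
  have "0 \<le> z^2*(6-5*z)" using assms by simp
  then show ?thesis by (simp add: power2_eq_square power3_eq_cube algebra_simps)
qed
lemma P3: fixes z :: real assumes "0<z" "z\<le>6/5" shows "z * (1 - z + z^2/2) \<le> z * (1 - z/6)^2"
proof -
  have "0 \<le> z^2*(24-17*z)" using assms by simp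
  then show ?thesis by (simp add: power2_eq_square power3_eq_cube algebra_simps)
qed

lemma key_real:
  fixes x c g :: real
  assumes x0: "0 < x" and x12: "x^2 \<le> 6/5" and c0: "0 < c" and gc: "c \<le> g"
    and g2: "c \<le> 1/2 \<Longrightarrow> 2*c*(1-c) \<le> g"
  shows "1 - 2 * sin x ^ 2 * g \<le> exp (-(2*c*x^2))"
proof -
  define sx where "sx = sin x"
  define z where "z = x^2"
  have z0: "0 < z" using x0 by (simp add: z_def)
  have slb: "x - x^3/6 \<le> sx" using sin_lb[of x] x0 by (simp add: sx_def)
  have slb0: "0 \<le> x - x^3/6"
  proof -
    have "x^3/6 = x * (x^2/6)" by (simp add: power3_eq_cube power2_eq_square)
    also have "\<dots> \<le> x * 1" using x12 x0 by (intro mult_left_mono) auto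
    finally show ?thesis by simp
  qed
  have s2: "(x - x^3/6)^2 \<le> sx^2" using slb slb0 by (intro power_mono) auto
  have s2z: "(x - x^3/6)^2 = z * (1 - z/6)^2"
    by (simp add: z_def power2_eq_square power3_eq_cube algebra_simps)
  have s2': "z * (1 - z/6)^2 \<le> sx^2" using s2 s2z by simp
  show ?thesis
  proof (cases "c \<le> 1/2")
    case True
    define aa where "aa = 2*c"
    have a0: "0 < aa" "aa \<le> 1" using True c0 by (auto simp: aa_def)
    have "1 - 2* sx^2*g \<le> 1 - aa*(2-aa)* sx^2"
    proof -
      have "aa*(2-aa) \<le> 2*g" using g2[OF True] by (simp add: aa_def algebra_simps)
      then have "aa*(2-aa)* sx^2 \<le> 2*g* sx^2" by (intro mult_right_mono) auto
      then show ?thesis by (simp add: algebra_simps)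
    qed
    also have "\<dots> \<le> 1 - aa*(2-aa)*(z*(1-z/6)^2)"
      using s2' a0 by (simp add: mult_left_mono)
    also have "\<dots> \<le> 1 - (aa*z) + (aa*z)^2/2 - (aa*z)^3/6"
    proof -
      have z12: "z \<le> 6/5" using x12 by (simp add: z_def)
      have "(2-aa)*(1-z/6)^2 \<ge> 1 - aa*z/2 + aa^2*z^2/6"
        using a0 z0 z12 by (rule P1)
      then have "aa*z*((2-aa)*(1-z/6)^2) \<ge> aa*z*(1 - aa*z/2 + aa^2*z^2/6)"
        using a0 z0 by (intro mult_left_mono) auto
      moreover have "1 - (aa*z) + (aa*z)^2/2 - (aa*z)^3/6 = 1 - aa*z*(1 - aa*z/2 + aa^2*z^2/6)"
        by (simp add: power2_eq_square power3_eq_cube field_simps)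
      moreover have "aa*(2-aa)*(z*(1-z/6)^2) = aa*z*((2-aa)*(1-z/6)^2)"
        by (simp add: algebra_simps)
      ultimately show ?thesis by linarith
    qed
    also have "\<dots> \<le> exp (-(aa*z))" by (rule exp_lb3) (use a0 z0 in simp)
    finally show ?thesis by (simp add: aa_def z_def sx_def)
  next
    case False
    have e1: "exp (-(2*c*z)) = exp (-z) * exp (-((2*c-1)*z))"
      by (subst exp_add[symmetric], rule arg_cong[where f=exp]) (simp add: algebra_simps)
    have e2: "1 - (2*c-1)*z \<le> exp (-((2*c-1)*z))"
      using exp_ge_add_one_self[of "-((2*c-1)*z)"] by simp
    have cos2: "1 - sx^2 \<le> exp (-z)"
    proof -
      have "1 - sx^2 \<le> 1 - z*(1-z/6)^2" using s2' by simp
      also have "\<dots> \<le> 1 - z + z^2/2 - z^3/6"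
        using z0 x12 P2[of z] by (simp add: z_def)
      also have "\<dots> \<le> exp (-z)" by (rule exp_lb3) (use z0 in simp)
      finally show ?thesis .
    qed
    have xe: "z * exp (-z) \<le> sx^2"
    proof -
      have "z * exp (-z) \<le> z * (1 - z + z^2/2)" using exp_ub2[of z] z0 by (intro mult_left_mono) auto
      also have "\<dots> \<le> z * (1 - z/6)^2" using z0 x12 P3[of z] by (simp add: z_def)
      finally show ?thesis using s2' by simp
    qed
    have "1 - 2* sx^2*g \<le> 1 - 2*c* sx^2"
      using gc mult_left_mono[OF gc, of "2 * sx^2"] by (simp add: mult.commute)
    also have "\<dots> = (1 - sx^2) - (2*c-1)* sx^2" by (simp add: algebra_simps)
    also have "\<dots> \<le> exp (-z) - (2*c-1)*(z*exp(-z))"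
    proof -
      have "(2*c-1)*(z*exp(-z)) \<le> (2*c-1)* sx^2" using xe False by (intro mult_left_mono) auto
      then show ?thesis using cos2 by linarith
    qed
    also have "\<dots> = exp (-z) * (1 - (2*c-1)*z)" by (simp add: algebra_simps)
    also have "\<dots> \<le> exp (-z) * exp (-((2*c-1)*z))"
      using e2 by (intro mult_left_mono) auto
    finally show ?thesis using e1 by (simp add: z_def sx_def)
  qed
qed

theorem lemma4p2:
  fixes p k M :: nat and c :: real and D :: "(nat \<Rightarrow> nat) \<Rightarrow> real"
  assumes "prime p" and "p \<ge> 3" and "k \<ge> 1" and "c > 0"
    and "is_distribution p k D"
    and "\<And>W. proper_affine_subspace p k W \<Longrightarrow> (\<Sum>x\<in>W. D x) \<le> 1 - c"
    and "M \<ge> 1"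
    and "real M \<ge> 2 * real k * (real p)^2 * ln (real p) / (c * pi^2)"
  shows "\<forall>x\<in>vecs p k. \<bar>conv_pow p k D M x - 1 / real p ^ k\<bar> \<le> 1 / real p ^ (2 * k)"
proof
  fix x assume x: "x \<in> vecs p k"
  let ?V = "vecs p k"
  have p1: "p > 1" using assms(2) by simp
  have p0: "p > 0" using p1 by simp
  have c0: "c > 0" by fact
  have D0: "\<And>x. x \<in> ?V \<Longrightarrow> D x \<ge> 0" and D1: "(\<Sum>x\<in>?V. D x) = 1"
    using assms(5) by (auto simp: is_distribution_def)
  define y where "y = pi / real p"
  define B where "B = exp (-(c * y^2))"
  have B0: "B \<ge> 0" by (simp add: B_def)
  have y0: "0 < y" using p0 by (simp add: y_def)
  have y12: "y^2 \<le> 6/5"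
  proof -
    have "y \<le> pi / 3" unfolding y_def using assms(2) by (intro divide_left_mono) auto
    also have "\<dots> \<le> 1.0472" using pi_approx by simp
    finally have "y \<le> 1.0472" .
    then have "y^2 \<le> 1.0472^2" using y0 by (intro power_mono) auto
    moreover have "(1.0472::real)^2 \<le> 6/5" by (simp add: power2_eq_square)
    ultimately show ?thesis by linarith
  qed
  have nz: "cmod (FT p k D \<xi>) \<le> B" if xi: "\<xi> \<in> ?V" "\<xi> \<noteq> vzero" for \<xi>
  proof -
    define P where "P = (\<Sum>x\<in>?V. D x * (\<Sum>y\<in>{y\<in>?V. chi p k \<xi> y = chi p k \<xi> x}. D y))"
    have Hb: "(\<Sum>y\<in>{y\<in>?V. chi p k \<xi> y = chi p k \<xi> x}. D y) \<le> 1 - c" if "x \<in> ?V" for x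
      using assms(6)[OF H_proper[OF p1 xi that]] by (simp add: Hset_def)
    have g1: "c \<le> 1 - P"
      using P_bound1[where V="?V" and D=D and h="chi p k \<xi>" and c=c] D0 D1 Hb by (simp add: P_def)
    have g2: "2*c*(1-c) \<le> 1 - P" if "c \<le> 1/2"
    proof -
      have "P \<le> (1-c)^2 + c^2"
        using P_bound2[where V="?V" and D=D and h="chi p k \<xi>" and c=c] D0 D1 Hb that by (simp add: P_def)
      then show ?thesis by (simp add: power2_eq_square algebra_simps)
    qed
    have "(cmod (FT p k D \<xi>))^2 \<le> 1 - 2 * sin y ^ 2 * (1 - P)"
      using FT_sq[OF p1 D0 D1, of \<xi>] by (simp add: P_def y_def)
    also have "\<dots> \<le> exp (-(2*c*y^2))"
      by (rule key_real[OF y0 y12 c0 g1 g2])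
    also have "\<dots> = B^2"
      by (simp add: B_def power2_eq_square exp_add[symmetric])
    finally show ?thesis using B0 by (rule power2_le_imp_le)
  qed
  have T0: "FT p k D vzero = 1"
    using D1 by (simp add: FT_def flip: of_real_sum)
  have inv: "complex_of_real (real p ^ k * conv_pow p k D M x)
      = (\<Sum>\<xi>\<in>?V. FT p k D \<xi> ^ M * cnj (chi p k \<xi> x))"
    using inversion[OF p1 x, of "conv_pow p k D M"] by (simp add: FT_pow[OF p0])
  also have "\<dots> = 1 + (\<Sum>\<xi>\<in>?V - {vzero}. FT p k D \<xi> ^ M * cnj (chi p k \<xi> x))"
    using sum.remove[OF finite_vecs vzero_in[OF p0], of "\<lambda>\<xi>. FT p k D \<xi> ^ M * cnj (chi p k \<xi> x)"]
    by (simp add: T0)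
  finally have eq: "complex_of_real (real p ^ k * conv_pow p k D M x - 1)
      = (\<Sum>\<xi>\<in>?V - {vzero}. FT p k D \<xi> ^ M * cnj (chi p k \<xi> x))" by simp
  have "\<bar>real p ^ k * conv_pow p k D M x - 1\<bar>
      = cmod (\<Sum>\<xi>\<in>?V - {vzero}. FT p k D \<xi> ^ M * cnj (chi p k \<xi> x))"
    by (metis eq norm_of_real)
  also have "\<dots> \<le> (\<Sum>\<xi>\<in>?V - {vzero}. cmod (FT p k D \<xi> ^ M * cnj (chi p k \<xi> x)))"
    by (rule norm_sum)
  also have "\<dots> \<le> (\<Sum>\<xi>\<in>?V - {vzero}. B ^ M)"
  proof (rule sum_mono)
    fix \<xi> assume "\<xi> \<in> ?V - {vzero}"
    then have "cmod (FT p k D \<xi>) \<le> B" using nz by blast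
    then show "cmod (FT p k D \<xi> ^ M * cnj (chi p k \<xi> x)) \<le> B ^ M"
      by (simp add: norm_mult norm_power power_mono)
  qed
  also have "\<dots> = (real p ^ k - 1) * B ^ M"
  proof -
    have "card (?V - {vzero}) = p ^ k - 1" using card_vecs vzero_in[OF p0] by simp
    moreover have "1 \<le> p ^ k" using p0 by simp
    ultimately show ?thesis by (simp add: of_nat_diff)
  qed
  also have "\<dots> \<le> (real p ^ k - 1) * (1 / real p ^ (2 * k))"
  proof (rule mult_left_mono)
    have "2 * real k * ln (real p) \<le> real M * c * y^2"
    proof -
      have pos: "0 < c * pi^2" using c0 by simp
      have "2 * real k * (real p)^2 * ln (real p) \<le> real M * (c * pi^2)"
        using assms(8) pos by (simp add: divide_le_eq)
      then have "2 * real k * ln (real p) * (real p)^2 \<le> (real M * c * y^2) * (real p)^2"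
        using p0 by (simp add: y_def power_divide field_simps)
      then show ?thesis using p0 by simp
    qed
    then have "B ^ M \<le> exp (-(2 * real k * ln (real p)))"
      by (simp add: B_def exp_of_nat_mult[symmetric])
    also have "\<dots> = 1 / real p ^ (2 * k)"
    proof -
      have e: "ln (real p ^ (2*k)) = 2 * real k * ln (real p)" using p0 by (simp add: ln_realpow)
      have "exp (2 * real k * ln (real p)) = real p ^ (2 * k)"
        using p0 by (simp flip: e)
      then show ?thesis by (simp add: exp_minus inverse_eq_divide)
    qed
    finally show "B ^ M \<le> 1 / real p ^ (2 * k)" .
    show "0 \<le> real p ^ k - 1" using p0 by simp
  qed
  finally have main: "\<bar>real p ^ k * conv_pow p k D M x - 1\<bar> \<le> (real p ^ k - 1) * (1 / real p ^ (2 * k))" .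
  define q where "q = real p ^ k"
  have q1: "q \<ge> 1" using p0 by (simp add: q_def)
  have q2: "real p ^ (2 * k) = q^2" by (simp add: q_def power_mult mult.commute)
  have "\<bar>conv_pow p k D M x - 1 / q\<bar> = \<bar>q * conv_pow p k D M x - 1\<bar> / q"
    using q1 by (simp add: field_simps abs_div_pos[symmetric])
  also have "\<dots> \<le> ((q - 1) * (1 / q^2)) / q"
    using main q1 by (intro divide_right_mono) (auto simp: q_def q2)
  also have "\<dots> \<le> 1 / q^2"
    using q1 by (simp add: field_simps)
  finally show "\<bar>conv_pow p k D M x - 1 / real p ^ k\<bar> \<le> 1 / real p ^ (2 * k)"
    by (simp add: q_def q2)
qed

end
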